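(* Let $\phi$ be the standard Gaussian density and $g'(x)=\mathsf{sign}(x)\phi(x)$. If $\mu$ is a non-negative Borel measure on $\mathbb{R}$ such that $$\int_{-\infty}^{\infty}g'(t-x)\,\mu(\mathrm{d}x)=0\quad\text{for all } t\in\mathbb{R},$$ then $\mu$ is a tempered distribution. *)

theory Defs
  imports "HOL-Probability.Probability"
begin

definition gprime :: "real \<Rightarrow> real" where
  "gprime x = sgn x * std_normal_density x"

definition schwartz_fun :: "(real \<Rightarrow> real) \<Rightarrow> bool" where
  "schwartz_fun f \<longleftrightarrow>
     (\<forall>m x. (deriv ^^ m) f differentiable (at x)) \<and>
     (\<forall>k m. bounded (range (\<lambda>x. x ^ k * (deriv ^^ m) f x)))"

definition schwartz_seminorm :: "nat \<Rightarrow> nat \<Rightarrow> (real \<Rightarrow> real) \<Rightarrow> real" where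
  "schwartz_seminorm k m f = (SUP x. \<bar>x ^ k * (deriv ^^ m) f x\<bar>)"

text \<open>A Borel measure on R is a tempered distribution if integration against it is a
  well-defined linear functional on the Schwartz space which is continuous, i.e. bounded by
  finitely many Schwartz seminorms.\<close>
definition tempered_measure :: "real measure \<Rightarrow> bool" where
  "tempered_measure M \<longleftrightarrow>
     (\<forall>f. schwartz_fun f \<longrightarrow> integrable M f) \<and>
     (\<exists>C N. \<forall>f. schwartz_fun f \<longrightarrow>
        \<bar>integral\<^sup>L M f\<bar> \<le> C * (\<Sum>k\<le>N. \<Sum>m\<le>N. schwartz_seminorm k m f))"

end

theory Submission
  imports Defs "HOL-Probability.Sinc_Integral"
begin

lemma gprime_abs_le: "\<bar>gprime x\<bar> \<le> std_normal_density x"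
  by (auto simp: gprime_def sgn_if abs_mult)

lemma gprime_measurable[measurable]: "gprime \<in> borel_measurable borel"
  unfolding gprime_def[abs_def] by measurable

lemma gprime_odd: "gprime (-x) = - gprime x"
  by (simp add: gprime_def normal_density_def)

lemma gprime_pos: "x > 0 \<Longrightarrow> gprime x = std_normal_density x"
  by (simp add: gprime_def)

lemma gprime_nonneg: "x \<ge> 0 \<Longrightarrow> gprime x \<ge> 0"
  by (simp add: gprime_def)

lemma phi_int: "integrable lborel std_normal_density"
  using integrable_normal_density[of 1 0] by simp

lemma integrable_gprime: "integrable lborel gprime"
  by (rule Bochner_Integration.integrable_bound[OF phi_int]) (auto simp: gprime_abs_le)

lemma integral_gprime: "(\<integral>x. gprime x \<partial>lborel) = 0"
proof -
  have "(\<integral>x. gprime x \<partial>lborel) = \<bar>-1\<bar> *\<^sub>R (\<integral>x. gprime (0 + (-1) * x) \<partial>lborel)"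
    by (rule lborel_integral_real_affine) simp
  also have "\<dots> = - (\<integral>x. gprime x \<partial>lborel)"
    by (simp add: gprime_odd)
  finally show ?thesis by simp
qed

lemma phi_mono: "\<bar>x\<bar> \<le> \<bar>y\<bar> \<Longrightarrow> std_normal_density y \<le> std_normal_density x"
proof -
  assume "\<bar>x\<bar> \<le> \<bar>y\<bar>"
  then have "x^2 \<le> (y\<^sup>2)" by (metis abs_le_square_iff)
  then have "exp (- (y\<^sup>2 / 2)) \<le> exp (- (x\<^sup>2 / 2))" by simp
  then show ?thesis by (simp add: std_normal_density_def divide_right_mono)
qed

lemma phi_shift:
  assumes "y \<ge> 0" "v \<ge> 0"
  shows "std_normal_density (y + v) \<le> exp (- (y\<^sup>2 / 2)) * std_normal_density v"
proof -
  have e: "(y + v)\<^sup>2 = y\<^sup>2 + v\<^sup>2 + 2 * (y * v)" by (simp add: power2_eq_square algebra_simps)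
  have "0 \<le> y * v" using assms by simp
  then have "- ((y+v)\<^sup>2)/2 \<le> - (y\<^sup>2)/2 + - (v\<^sup>2)/2" using e by linarith
  then have "exp (- ((y+v)\<^sup>2 / 2)) \<le> exp (- (y\<^sup>2 / 2)) * exp (- (v\<^sup>2 / 2))"
    by (simp add: exp_add[symmetric])
  then show ?thesis by (simp add: std_normal_density_def divide_right_mono)
qed

lemma integrable_ind_gprime:
  assumes [measurable]: "S \<in> sets borel"
  shows "integrable lborel (\<lambda>u. indicator S u * gprime u)"
  by (rule Bochner_Integration.integrable_bound[OF phi_int])
     (auto simp: gprime_abs_le abs_mult split: split_indicator)

lemma integrable_ind_phi:
  assumes [measurable]: "S \<in> sets borel"
  shows "integrable lborel (\<lambda>u. indicator S u * std_normal_density u)"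
  by (rule Bochner_Integration.integrable_bound[OF phi_int])
     (auto simp: abs_mult split: split_indicator)

lemma tail_le:
  assumes [measurable]: "S \<in> sets borel" and z: "z \<ge> 0" and S: "S \<subseteq> {z..}"
  shows "(\<integral>u. indicator S u * gprime u \<partial>lborel) \<le> exp (- (z\<^sup>2 / 2))"
proof -
  have "(\<integral>u. indicator S u * gprime u \<partial>lborel) \<le> (\<integral>u. indicator {z..} u * std_normal_density u \<partial>lborel)"
    using S by (intro Bochner_Integration.integral_mono integrable_ind_gprime integrable_ind_phi)
       (auto simp: split: split_indicator intro: order_trans[OF abs_ge_self gprime_abs_le])
  also have "\<dots> = \<bar>1\<bar> *\<^sub>R (\<integral>v. indicator {z..} (z + 1 * v) * std_normal_density (z + 1 * v) \<partial>lborel)"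
    by (rule lborel_integral_real_affine) simp
  also have "\<dots> = (\<integral>v. indicator {0..} v * std_normal_density (z + v) \<partial>lborel)"
    apply simp by (intro Bochner_Integration.integral_cong) (auto split: split_indicator)
  also have "\<dots> \<le> (\<integral>v. exp (- (z\<^sup>2 / 2)) * std_normal_density v \<partial>lborel)"
  proof (intro Bochner_Integration.integral_mono)
    show "integrable lborel (\<lambda>v. indicator {0..} v * std_normal_density (z + v))"
      by (rule Bochner_Integration.integrable_bound[of _ "\<lambda>v. exp (- (z\<^sup>2 / 2)) * std_normal_density v"])
         (auto simp: abs_mult phi_int split: split_indicator intro!: AE_I2 phi_shift[OF z])
  qed (auto simp: phi_int z phi_shift split: split_indicator)
  also have "\<dots> = exp (- (z\<^sup>2 / 2))" by simp
  finally show ?thesis .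
qed

lemma tail_nonneg:
  assumes "S \<subseteq> {0..}"
  shows "0 \<le> (\<integral>u. indicator S u * gprime u \<partial>lborel)"
  using assms by (intro Bochner_Integration.integral_nonneg) (auto simp: gprime_nonneg split: split_indicator)

lemma tail_lower:
  assumes [measurable]: "S \<in> sets borel" and "{1<..2} \<subseteq> S" "S \<subseteq> {0..}"
  shows "std_normal_density 2 \<le> (\<integral>u. indicator S u * gprime u \<partial>lborel)"
proof -
  have "std_normal_density 2 = (\<integral>u. indicator {1<..2::real} u * std_normal_density 2 \<partial>lborel)"
    by simp
  also have "\<dots> \<le> (\<integral>u. indicator S u * gprime u \<partial>lborel)"
  proof (intro Bochner_Integration.integral_mono integrable_ind_gprime)
    show "integrable lborel (\<lambda>u. indicator {1<..2::real} u * std_normal_density 2)"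
      by (intro integrable_mult_left integrable_real_indicator) auto
    fix u :: real
    show "indicator {1<..2} u * std_normal_density 2 \<le> indicator S u * gprime u"
    proof (cases "u \<in> {1<..2}")
      case True
      then have "u \<in> S" using assms by auto
      with True show ?thesis by (simp add: gprime_pos phi_mono)
    qed (auto simp: gprime_nonneg split: split_indicator dest!: subsetD[OF assms(3)])
  qed simp
  finally show ?thesis .
qed

definition R :: "real \<Rightarrow> real" where
  "R y = (\<integral>u. indicator {y..} u * gprime u \<partial>lborel)"

lemma R_neg:
  assumes "y < 0"
  shows "R y = (\<integral>u. indicator {-y<..} u * gprime u \<partial>lborel)"
proof -
  have "R y = (\<integral>u. gprime u - indicator {..<y} u * gprime u \<partial>lborel)"
    unfolding R_def by (intro Bochner_Integration.integral_cong) (auto split: split_indicator)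
  also have "\<dots> = (\<integral>u. gprime u \<partial>lborel) - (\<integral>u. indicator {..<y} u * gprime u \<partial>lborel)"
    by (intro Bochner_Integration.integral_diff integrable_gprime integrable_ind_gprime) simp
  also have "(\<integral>u. indicator {..<y} u * gprime u \<partial>lborel) =
      \<bar>-1\<bar> *\<^sub>R (\<integral>v. indicator {..<y} (0 + -1 * v) * gprime (0 + -1 * v) \<partial>lborel)"
    by (rule lborel_integral_real_affine) simp
  also have "\<dots> = - (\<integral>v. indicator {-y<..} v * gprime v \<partial>lborel)"
    by (simp add: gprime_odd indicator_def minus_less_iff)
  finally show ?thesis by (simp add: integral_gprime)
qed

lemma R_nonneg: "0 \<le> R y"
proof (cases "y < 0")
  case True then show ?thesis by (simp add: R_neg tail_nonneg subset_eq)
next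
  case False then show ?thesis unfolding R_def by (intro tail_nonneg) auto
qed

lemma R_le: "R y \<le> exp (- (y\<^sup>2 / 2))"
proof (cases "y < 0")
  case True
  then have "R y \<le> exp (- ((-y)\<^sup>2 / 2))" unfolding R_neg[OF True] by (intro tail_le) auto
  then show ?thesis by simp
next
  case False then show ?thesis unfolding R_def by (intro tail_le) auto
qed

lemma R_lower: "\<bar>y\<bar> \<le> 1 \<Longrightarrow> std_normal_density 2 \<le> R y"
proof (cases "y < 0")
  case True
  assume "\<bar>y\<bar> \<le> 1"
  with True show ?thesis by (simp add: R_neg tail_lower subset_eq)
next
  case False
  assume "\<bar>y\<bar> \<le> 1"
  with False show ?thesis unfolding R_def by (intro tail_lower) auto
qed

lemma R_measurable[measurable]: "R \<in> borel_measurable borel"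
proof -
  have "(\<lambda>y. \<integral>u. (if y \<le> u then gprime u else 0) \<partial>lborel) \<in> borel_measurable borel"
    by measurable
  moreover have "R = (\<lambda>y. \<integral>u. (if y \<le> u then gprime u else 0) \<partial>lborel)"
    unfolding R_def by (intro ext Bochner_Integration.integral_cong) (auto split: split_indicator)
  ultimately show ?thesis by simp
qed

lemma abs_gprime: "y \<noteq> 0 \<Longrightarrow> \<bar>gprime y\<bar> = std_normal_density y"
  by (auto simp: gprime_def sgn_if)

lemma phi0_eq: "std_normal_density 0 = exp (1/2) * std_normal_density 1"
proof -
  have "exp (1/2) * exp (- (1/2)) = (1::real)" by (simp add: exp_add[symmetric])
  then show ?thesis by (simp add: std_normal_density_def)
qed

lemma exp_phi: "exp (- (y\<^sup>2 / 2)) = sqrt (2 * pi) * std_normal_density y"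
  by (simp add: std_normal_density_def)

lemma phi_interval_bound:
  assumes "a \<le> t" "t \<le> b"
  shows "std_normal_density (t - x) \<le> exp ((b - a)\<^sup>2 / 2) * (std_normal_density (a - x) + std_normal_density (b - x))"
proof -
  have K: "1 \<le> exp ((b - a)\<^sup>2 / 2)" by simp
  have nn: "0 \<le> std_normal_density (a - x)" "0 \<le> std_normal_density (b - x)" by simp_all
  consider "x \<le> a" | "b \<le> x" | "a < x" "x < b" by linarith
  then show ?thesis
  proof cases
    case 1
    then have "std_normal_density (t - x) \<le> std_normal_density (a - x)"
      using assms by (intro phi_mono) auto
    also have "\<dots> \<le> 1 * (std_normal_density (a - x) + std_normal_density (b - x))" using nn by simp
    also have "\<dots> \<le> exp ((b - a)\<^sup>2 / 2) * (std_normal_density (a - x) + std_normal_density (b - x))"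
      using K nn by (intro mult_right_mono) auto
    finally show ?thesis .
  next
    case 2
    then have "std_normal_density (t - x) \<le> std_normal_density (b - x)"
      using assms by (intro phi_mono) auto
    also have "\<dots> \<le> 1 * (std_normal_density (a - x) + std_normal_density (b - x))" using nn by simp
    also have "\<dots> \<le> exp ((b - a)\<^sup>2 / 2) * (std_normal_density (a - x) + std_normal_density (b - x))"
      using K nn by (intro mult_right_mono) auto
    finally show ?thesis .
  next
    case 3
    have "std_normal_density (t - x) \<le> std_normal_density 0"
      by (intro phi_mono) auto
    also have "\<dots> \<le> exp ((b - a)\<^sup>2 / 2) * std_normal_density (a - x)"
    proof -
      have "(a - x)\<^sup>2 \<le> (b - a)\<^sup>2" proof -
        have "\<bar>a - x\<bar> \<le> \<bar>b - a\<bar>" using 3 by linarith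
        then show ?thesis by (simp add: abs_le_square_iff)
      qed
      then have "1 \<le> exp ((b - a)\<^sup>2 / 2) * exp (- ((a - x)\<^sup>2 / 2))"
        by (simp add: exp_add[symmetric])
      then have "1 / sqrt (2 * pi) \<le> exp ((b - a)\<^sup>2 / 2) * exp (- ((a - x)\<^sup>2 / 2)) / sqrt (2 * pi)"
        by (simp add: divide_right_mono)
      then show ?thesis by (simp add: std_normal_density_def)
    qed
    also have "\<dots> \<le> exp ((b - a)\<^sup>2 / 2) * (std_normal_density (a - x) + std_normal_density (b - x))"
      by (intro mult_left_mono) auto
    finally show ?thesis .
  qed
qed

lemma w_lower:
  assumes "\<bar>s - x\<bar> \<le> 1"
  shows "inverse (1 + x\<^sup>2) / 3 \<le> inverse (1 + (s::real)\<^sup>2)"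
proof -
  have "\<bar>s\<bar> \<le> \<bar>\<bar>x\<bar> + 1\<bar>" using assms by linarith
  then have "s\<^sup>2 \<le> (\<bar>x\<bar> + 1)\<^sup>2" by (metis abs_le_square_iff)
  moreover have "(\<bar>x\<bar> + 1)\<^sup>2 \<le> 2 * x\<^sup>2 + 2"
  proof -
    have "0 \<le> (\<bar>x\<bar> - 1)\<^sup>2" by simp
    then show ?thesis by (simp add: power2_eq_square algebra_simps)
  qed
  ultimately have "1 + s\<^sup>2 \<le> 3 * (1 + x\<^sup>2)" using zero_le_power2[of x] by (smt (verit))
  then show ?thesis
    by (simp add: field_simps add_pos_nonneg)
qed

theorem lemma10:
  fixes \<mu> :: "real measure"
  assumes "sets \<mu> = sets borel"
    and "\<And>t. integrable \<mu> (\<lambda>x. gprime (t - x))"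
    and "\<And>t. (\<integral>x. gprime (t - x) \<partial>\<mu>) = 0"
  shows "tempered_measure \<mu>"
proof -
  note sets = assms(1) and int = assms(2) and zero = assms(3)
  have sets_cong[measurable_cong]: "sets \<mu> = sets borel" by (fact sets)
  have sp: "space \<mu> = UNIV" using sets_eq_imp_space_eq[OF sets] by simp
  have sets_pair[measurable_cong]: "sets (\<mu> \<Otimes>\<^sub>M lborel) = sets (borel \<Otimes>\<^sub>M borel)"
    by (intro sets_pair_measure_cong) (simp_all add: sets)

  have phi_int_mu: "integrable \<mu> (\<lambda>x. std_normal_density (s - x))" for s
  proof (rule Bochner_Integration.integrable_bound[of _ "\<lambda>x. \<bar>gprime (s - x)\<bar> + exp (1/2) * \<bar>gprime (s + 1 - x)\<bar>"])
    show "integrable \<mu> (\<lambda>x. \<bar>gprime (s - x)\<bar> + exp (1/2) * \<bar>gprime (s + 1 - x)\<bar>)"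
      by (intro Bochner_Integration.integrable_add integrable_abs integrable_mult_right int)
    show "(\<lambda>x. std_normal_density (s - x)) \<in> borel_measurable \<mu>" by measurable
    show "AE x in \<mu>. norm (std_normal_density (s - x)) \<le> norm (\<bar>gprime (s - x)\<bar> + exp (1/2) * \<bar>gprime (s + 1 - x)\<bar>)"
    proof (intro AE_I2)
      fix x
      show "norm (std_normal_density (s - x)) \<le> norm (\<bar>gprime (s - x)\<bar> + exp (1/2) * \<bar>gprime (s + 1 - x)\<bar>)"
      proof (cases "x = s")
        case True
        then show ?thesis using phi0_eq abs_gprime[of 1] by simp
      next
        case False
        then have "\<bar>gprime (s - x)\<bar> = std_normal_density (s - x)" by (intro abs_gprime) simp
        then show ?thesis by simp
      qed
    qed
  qed

  have fin: "emeasure \<mu> {- real n..real n} < \<infinity>" for n :: nat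
  proof -
    have pos: "0 < std_normal_density (real n)" by (simp add: normal_density_pos)
    have "emeasure \<mu> {- real n..real n} = (\<integral>\<^sup>+x. indicator {- real n..real n} x \<partial>\<mu>)"
      by (simp add: sets)
    also have "\<dots> \<le> (\<integral>\<^sup>+x. ennreal (std_normal_density (0 - x) / std_normal_density (real n)) \<partial>\<mu>)"
    proof (intro nn_integral_mono)
      fix x
      show "indicator {- real n..real n} x \<le> ennreal (std_normal_density (0 - x) / std_normal_density (real n))"
      proof (cases "x \<in> {- real n..real n}")
        case True
        then have "std_normal_density (real n) \<le> std_normal_density (0 - x)"
          by (intro phi_mono) auto
        then show ?thesis using True pos by simp
      qed simp
    qed
    also have "\<dots> = ennreal (\<integral>x. std_normal_density (0 - x) / std_normal_density (real n) \<partial>\<mu>)"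
      by (intro nn_integral_eq_integral integrable_divide phi_int_mu) auto
    also have "\<dots> < \<infinity>" by simp
    finally show ?thesis .
  qed

  have sf: "sigma_finite_measure \<mu>"
    unfolding sigma_finite_measure_def
  proof (intro exI[of _ "range (\<lambda>n::nat. {- real n..real n})"] conjI)
    show "\<Union> (range (\<lambda>n::nat. {- real n..real n})) = space \<mu>"
    proof -
      have "x \<in> (\<Union>n. {- real n..real n})" for x :: real
      proof -
        obtain n :: nat where "\<bar>x\<bar> \<le> real n" using real_arch_simple by blast
        then have "x \<in> {- real n..real n}" by auto
        then show ?thesis by blast
      qed
      then show ?thesis by (auto simp: sp)
    qed
    show "\<forall>a\<in>range (\<lambda>n::nat. {- real n..real n}). emeasure \<mu> a \<noteq> \<infinity>"
      using fin by (auto simp: less_top)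
  qed (auto simp: sets)

  interpret pair_sigma_finite \<mu> lborel
    by (intro pair_sigma_finite.intro sf lborel.sigma_finite_measure_axioms)

  have key: "(\<integral>x. R (a - x) - R (b - x) \<partial>\<mu>) = 0" if ab: "a \<le> b" for a b
  proof -
    define K where "K = exp ((b - a)\<^sup>2 / 2)"
    define F where "F = (\<lambda>x t. indicator {a..<b} t * gprime (t - x))"
    have Fm[measurable]: "(\<lambda>(x, t). F x t) \<in> borel_measurable (\<mu> \<Otimes>\<^sub>M lborel)"
      unfolding F_def by measurable
    have Fint: "integrable (\<mu> \<Otimes>\<^sub>M lborel) (\<lambda>(x, t). F x t)"
    proof (rule integrableI_bounded)
      have "(\<integral>\<^sup>+p. ennreal (norm ((\<lambda>(x, t). F x t) p)) \<partial>(\<mu> \<Otimes>\<^sub>M lborel))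
          = (\<integral>\<^sup>+x. (\<integral>\<^sup>+t. ennreal (norm (F x t)) \<partial>lborel) \<partial>\<mu>)"
        by (subst lborel.nn_integral_fst[symmetric]) (auto simp: case_prod_beta)
      also have "\<dots> \<le> (\<integral>\<^sup>+x. ennreal (K * (std_normal_density (a - x) + std_normal_density (b - x))) * emeasure lborel {a..<b} \<partial>\<mu>)"
      proof (intro nn_integral_mono)
        fix x
        have "(\<integral>\<^sup>+t. ennreal (norm (F x t)) \<partial>lborel)
            \<le> (\<integral>\<^sup>+t. ennreal (K * (std_normal_density (a - x) + std_normal_density (b - x))) * indicator {a..<b} t \<partial>lborel)"
        proof (intro nn_integral_mono)
          fix t
          show "ennreal (norm (F x t)) \<le> ennreal (K * (std_normal_density (a - x) + std_normal_density (b - x))) * indicator {a..<b} t"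
          proof (cases "t \<in> {a..<b}")
            case True
            have "\<bar>gprime (t - x)\<bar> \<le> K * (std_normal_density (a - x) + std_normal_density (b - x))"
              using gprime_abs_le[of "t - x"] phi_interval_bound[of a t b x] True unfolding K_def by auto
            then show ?thesis using True by (simp add: F_def)
          qed (simp add: F_def)
        qed
        also have "\<dots> = ennreal (K * (std_normal_density (a - x) + std_normal_density (b - x))) * emeasure lborel {a..<b}"
          by (intro nn_integral_cmult_indicator) simp
        finally show "(\<integral>\<^sup>+t. ennreal (norm (F x t)) \<partial>lborel) \<le> ennreal (K * (std_normal_density (a - x) + std_normal_density (b - x))) * emeasure lborel {a..<b}" .
      qed
      also have "\<dots> = (\<integral>\<^sup>+x. ennreal (K * (std_normal_density (a - x) + std_normal_density (b - x)) * (b - a)) \<partial>\<mu>)"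
        using ab by (intro nn_integral_cong) (simp add: ennreal_mult K_def)
      also have "\<dots> = ennreal (\<integral>x. K * (std_normal_density (a - x) + std_normal_density (b - x)) * (b - a) \<partial>\<mu>)"
        using ab
        by (intro nn_integral_eq_integral integrable_mult_right integrable_mult_left
              Bochner_Integration.integrable_add phi_int_mu) (auto simp: K_def)
      also have "\<dots> < \<infinity>" by simp
      finally show "(\<integral>\<^sup>+p. ennreal (norm ((\<lambda>(x, t). F x t) p)) \<partial>(\<mu> \<Otimes>\<^sub>M lborel)) < \<infinity>" .
    qed (fact Fm)
    have inner: "(\<integral>t. F x t \<partial>lborel) = R (a - x) - R (b - x)" for x
    proof -
      have "(\<integral>t. F x t \<partial>lborel) = \<bar>1\<bar> *\<^sub>R (\<integral>u. F x (x + 1 * u) \<partial>lborel)"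
        by (rule lborel_integral_real_affine) simp
      also have "\<dots> = (\<integral>u. indicator {a - x..} u * gprime u - indicator {b - x..} u * gprime u \<partial>lborel)"
        using ab by (simp add: F_def) (intro Bochner_Integration.integral_cong, auto split: split_indicator)
      also have "\<dots> = R (a - x) - R (b - x)"
        unfolding R_def by (intro Bochner_Integration.integral_diff integrable_ind_gprime) auto
      finally show ?thesis .
    qed
    have "(\<integral>x. R (a - x) - R (b - x) \<partial>\<mu>) = (\<integral>x. (\<integral>t. F x t \<partial>lborel) \<partial>\<mu>)"
      by (simp add: inner)
    also have "\<dots> = (\<integral>t. (\<integral>x. F x t \<partial>\<mu>) \<partial>lborel)"
      by (rule Fubini_integral[symmetric, OF Fint])
    also have "\<dots> = (\<integral>t. indicator {a..<b} t * (\<integral>x. gprime (t - x) \<partial>\<mu>) \<partial>lborel)"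
      unfolding F_def by (intro Bochner_Integration.integral_cong refl integral_mult_right_zero)
    also have "\<dots> = 0" by (simp add: zero)
    finally show ?thesis .
  qed

  have Rint: "integrable \<mu> (\<lambda>x. R (s - x))" for s
  proof (rule Bochner_Integration.integrable_bound[of _ "\<lambda>x. sqrt (2*pi) * std_normal_density (s - x)"])
    show "integrable \<mu> (\<lambda>x. sqrt (2*pi) * std_normal_density (s - x))"
      by (intro integrable_mult_right phi_int_mu)
    show "(\<lambda>x. R (s - x)) \<in> borel_measurable \<mu>" by measurable
    show "AE x in \<mu>. norm (R (s - x)) \<le> norm (sqrt (2*pi) * std_normal_density (s - x))"
    proof (intro AE_I2)
      fix x
      have "R (s - x) \<le> sqrt (2*pi) * std_normal_density (s - x)"
        using R_le[of "s - x"] exp_phi[of "s - x"] by simp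
      then show "norm (R (s - x)) \<le> norm (sqrt (2*pi) * std_normal_density (s - x))"
        using R_nonneg[of "s - x"] by simp
    qed
  qed
  define T where "T s = (\<integral>x. R (s - x) \<partial>\<mu>)" for s
  have Tdiff: "T a - T b = 0" if "a \<le> b" for a b
    using key[OF that] unfolding T_def
    by (subst Bochner_Integration.integral_diff[symmetric]) (auto intro: Rint)
  have Tconst: "T s = T 0" for s
  proof (cases "s \<le> 0")
    case True then show ?thesis using Tdiff[of s 0] by simp
  next
    case False then show ?thesis using Tdiff[of 0 s] by simp
  qed
  have T0_nonneg: "0 \<le> T 0"
    unfolding T_def by (intro Bochner_Integration.integral_nonneg R_nonneg)

  define w :: "real \<Rightarrow> real" where "w x = inverse (1 + x\<^sup>2)" for x
  have w_pos: "0 < w x" for x unfolding w_def by (simp add: add_pos_nonneg)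
  have w_meas[measurable]: "w \<in> borel_measurable borel" unfolding w_def[abs_def] by measurable
  have w_int_lborel: "integrable lborel w"
    using integrable_inverse_1_plus_square unfolding set_integrable_def w_def[abs_def]
    by (simp add: einterval_def)
  define q where "q = std_normal_density 2"
  have q_pos: "0 < q" unfolding q_def by (simp add: normal_density_pos)
  define c where "c = 3 / (2 * q)"
  have c_pos: "0 < c" unfolding c_def using q_pos by simp

  have lb: "ennreal (w x) \<le> (\<integral>\<^sup>+s. ennreal (c * w s * R (s - x)) \<partial>lborel)" for x
  proof -
    have "ennreal (w x) = ennreal (w x / 2) * emeasure lborel {x - 1..x + 1}"
      using ennreal_mult[of "w x / 2" 2] w_pos[of x] by simp
    also have "\<dots> = (\<integral>\<^sup>+s. ennreal (w x / 2) * indicator {x - 1..x + 1} s \<partial>lborel)"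
      by (intro nn_integral_cmult_indicator[symmetric]) simp
    also have "\<dots> \<le> (\<integral>\<^sup>+s. ennreal (c * w s * R (s - x)) \<partial>lborel)"
    proof (intro nn_integral_mono)
      fix s
      show "ennreal (w x / 2) * indicator {x - 1..x + 1} s \<le> ennreal (c * w s * R (s - x))"
      proof (cases "s \<in> {x - 1..x + 1}")
        case True
        then have abs1: "\<bar>s - x\<bar> \<le> 1" by auto
        have Rq: "q \<le> R (s - x)" unfolding q_def using R_lower[OF abs1] .
        have ws: "w x / 3 \<le> w s" unfolding w_def using w_lower[OF abs1] .
        have "w x / 2 = c * (w x / 3) * q" unfolding c_def using q_pos by (simp add: field_simps)
        also have "\<dots> \<le> c * w s * R (s - x)"
          using ws Rq c_pos q_pos w_pos[of x]
          by (intro mult_mono mult_left_mono) auto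
        finally show ?thesis using True by (simp add: ennreal_leI)
      qed simp
    qed
    finally show ?thesis .
  qed
  have w_nn: "(\<integral>\<^sup>+x. ennreal (w x) \<partial>\<mu>) < \<infinity>"
  proof -
    have "(\<integral>\<^sup>+x. ennreal (w x) \<partial>\<mu>) \<le> (\<integral>\<^sup>+x. (\<integral>\<^sup>+s. ennreal (c * w s * R (s - x)) \<partial>lborel) \<partial>\<mu>)"
      by (intro nn_integral_mono lb)
    also have "\<dots> = (\<integral>\<^sup>+s. (\<integral>\<^sup>+x. ennreal (c * w s * R (s - x)) \<partial>\<mu>) \<partial>lborel)"
      by (rule Fubini'[symmetric]) measurable
    also have "\<dots> = (\<integral>\<^sup>+s. ennreal (c * w s * T 0) \<partial>lborel)"
    proof (intro nn_integral_cong)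
      fix s
      have "(\<integral>\<^sup>+x. ennreal (c * w s * R (s - x)) \<partial>\<mu>) = ennreal (\<integral>x. c * w s * R (s - x) \<partial>\<mu>)"
        using c_pos w_pos[of s]
        by (intro nn_integral_eq_integral integrable_mult_right Rint AE_I2) (auto intro!: mult_nonneg_nonneg simp: R_nonneg)
      also have "(\<integral>x. c * w s * R (s - x) \<partial>\<mu>) = c * w s * T s" unfolding T_def by simp
      finally show "(\<integral>\<^sup>+x. ennreal (c * w s * R (s - x)) \<partial>\<mu>) = ennreal (c * w s * T 0)"
        by (simp add: Tconst[of s])
    qed
    also have "\<dots> = ennreal (\<integral>s. c * w s * T 0 \<partial>lborel)"
      using c_pos T0_nonneg w_pos
      by (intro nn_integral_eq_integral integrable_mult_left integrable_mult_right w_int_lborel AE_I2) (auto intro!: mult_nonneg_nonneg simp: less_imp_le)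
    also have "\<dots> < \<infinity>" by simp
    finally show ?thesis .
  qed
  have w_int: "integrable \<mu> w"
  proof (rule integrableI_bounded)
    show "w \<in> borel_measurable \<mu>" by measurable
    show "(\<integral>\<^sup>+x. ennreal (norm (w x)) \<partial>\<mu>) < \<infinity>"
      using w_nn w_pos by (simp add: less_imp_le)
  qed
  define W where "W = (\<integral>x. w x \<partial>\<mu>)"

  have W_nonneg: "0 \<le> W" unfolding W_def
    using w_pos by (intro Bochner_Integration.integral_nonneg) (simp add: less_imp_le)
  have bound: "integrable \<mu> f \<and> \<bar>integral\<^sup>L \<mu> f\<bar> \<le> W * (\<Sum>k\<le>2. \<Sum>m\<le>2. schwartz_seminorm k m f)"
    if sf: "schwartz_fun f" for f
  proof -
    let ?S = "\<lambda>k m. schwartz_seminorm k m f"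
    have bdd: "bdd_above (range (\<lambda>x. \<bar>x ^ k * (deriv ^^ m) f x\<bar>))" for k m
    proof -
      have "bounded (range (\<lambda>x. x ^ k * (deriv ^^ m) f x))" using sf unfolding schwartz_fun_def by blast
      then obtain B where "\<forall>y\<in>range (\<lambda>x. x ^ k * (deriv ^^ m) f x). norm y \<le> B"
        unfolding bounded_iff by blast
      then show ?thesis by (intro bdd_aboveI[of _ B]) auto
    qed
    have le: "\<bar>x ^ k * (deriv ^^ m) f x\<bar> \<le> ?S k m" for x k m
      unfolding schwartz_seminorm_def by (rule cSUP_upper[OF UNIV_I bdd])
    have S_nonneg: "0 \<le> ?S k m" for k m using le[of 0 k m] abs_ge_zero order_trans by blast
    have fx: "\<bar>f x\<bar> \<le> (?S 0 0 + ?S 2 0) * w x" for x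
    proof -
      have a: "\<bar>f x\<bar> \<le> ?S 0 0" using le[of x 0 0] by simp
      have b: "\<bar>x\<^sup>2 * f x\<bar> \<le> ?S 2 0" using le[of x 2 0] by simp
      have "\<bar>f x\<bar> * (1 + x\<^sup>2) = \<bar>f x\<bar> + \<bar>x\<^sup>2 * f x\<bar>" by (simp add: abs_mult algebra_simps)
      also have "\<dots> \<le> ?S 0 0 + ?S 2 0" using a b by simp
      finally have "\<bar>f x\<bar> * (1 + x\<^sup>2) \<le> ?S 0 0 + ?S 2 0" .
      moreover have "0 < 1 + x\<^sup>2" by (simp add: add_pos_nonneg)
      ultimately show ?thesis unfolding w_def by (simp add: field_simps)
    qed
    have cont: "continuous_on UNIV f"
    proof (intro continuous_at_imp_continuous_on ballI)
      fix x :: real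
      have "(deriv ^^ 0) f differentiable (at x)" using sf unfolding schwartz_fun_def by blast
      then show "isCont f x" by (simp add: differentiable_imp_continuous_within)
    qed
    have fm: "f \<in> borel_measurable \<mu>"
      using borel_measurable_continuous_onI[OF cont] measurable_cong_sets[OF sets refl] by simp
    have fint: "integrable \<mu> f"
    proof (rule Bochner_Integration.integrable_bound[of _ "\<lambda>x. (?S 0 0 + ?S 2 0) * w x"])
      show "integrable \<mu> (\<lambda>x. (?S 0 0 + ?S 2 0) * w x)" by (intro integrable_mult_right w_int)
      show "AE x in \<mu>. norm (f x) \<le> norm ((?S 0 0 + ?S 2 0) * w x)"
      proof (intro AE_I2)
        fix x
        have "0 \<le> (?S 0 0 + ?S 2 0) * w x" using S_nonneg w_pos[of x] by (simp add: less_imp_le)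
        then show "norm (f x) \<le> norm ((?S 0 0 + ?S 2 0) * w x)" using fx[of x] by simp
      qed
    qed (fact fm)
    have "\<bar>integral\<^sup>L \<mu> f\<bar> \<le> (\<integral>x. norm (f x) \<partial>\<mu>)"
      using integral_norm_bound[of \<mu> f] by simp
    also have "\<dots> \<le> (\<integral>x. (?S 0 0 + ?S 2 0) * w x \<partial>\<mu>)"
      using fx by (intro Bochner_Integration.integral_mono integrable_mult_right w_int integrable_norm fint) auto
    also have "\<dots> = (?S 0 0 + ?S 2 0) * W" unfolding W_def by simp
    also have "\<dots> \<le> (\<Sum>k\<le>2. \<Sum>m\<le>2. ?S k m) * W"
    proof (intro mult_right_mono W_nonneg)
      have s0: "?S k 0 \<le> (\<Sum>m\<le>2. ?S k m)" for k
        by (rule member_le_sum) (auto simp: S_nonneg)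
      have "(\<Sum>k\<in>{0,2::nat}. \<Sum>m\<le>2. ?S k m) \<le> (\<Sum>k\<le>2. \<Sum>m\<le>2. ?S k m)"
        by (intro sum_mono2) (auto intro!: sum_nonneg S_nonneg)
      moreover have "(\<Sum>k\<in>{0,2::nat}. \<Sum>m\<le>2. ?S k m) = (\<Sum>m\<le>2. ?S 0 m) + (\<Sum>m\<le>2. ?S 2 m)" by simp
      ultimately show "?S 0 0 + ?S 2 0 \<le> (\<Sum>k\<le>2. \<Sum>m\<le>2. ?S k m)"
        using s0[of 0] s0[of 2] by linarith
    qed
    finally show ?thesis using fint by (simp add: mult.commute)
  qed
  show ?thesis unfolding tempered_measure_def
  proof (intro conjI allI impI exI[of _ W] exI[of _ "2::nat"])
    fix f assume "schwartz_fun f"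
    then show "integrable \<mu> f" using bound by blast
  next
    fix f assume "schwartz_fun f"
    then show "\<bar>integral\<^sup>L \<mu> f\<bar> \<le> W * (\<Sum>k\<le>2. \<Sum>m\<le>2. schwartz_seminorm k m f)" using bound by blast
  qed
qed

end
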